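(* Let $V$ be a set and $(\mathcal{H}_\ell)_{\ell\in\mathbb{Z}}$ a hypergraph chain over $V$ with Helly Number $h$ and Colorful Helly Number $k$. Then for every $\ell\in\mathbb{Z}$ and every finite subset $S\subset V$: (a) $\left|\binom{S}{k}\setminus\mathcal{H}_\ell\right|\ge\binom{\frac1k\left(|S|-\omega_k(\mathcal{H}_{\ell+1}|_S)\right)}{k}$, and (b) $\left|\binom{S}{h}\setminus\mathcal{H}_\ell\right|\ge\binom{k}{h}^{-1}\binom{\frac1h\left(|S|-\omega_h(\mathcal{H}_{\ell+2}|_S)\right)}{h}$.
   Context: A hypergraph on $V$ is a family $\mathcal{H}\subset 2^V$; it is downwards closed if $H\in\mathcal{H}$, $G\subset H$ imply $G\in\mathcal{H}$. A hypergraph chain over $V$ is a sequence $(\mathcal{H}_\ell)_{\ell\in\mathbb{Z}}$ of downwards closed hypergraphs on $V$ with $\mathcal{H}_\ell\subset\mathcal{H}_{\ell+1}$. It has Helly Number $h$ if for every $\ell$ and every $S\subseteq V$, $\binom{S}{h}\subset\mathcal{H}_\ell$ implies $S\in\mathcal{H}_{\ell+1}$, where $\binom{S}{h}$ is the set of $h$-element subsets of $S$. For $S_1,\dots,S_k\subset V$, $F\subset V$ is a colorful selection if there is a surjection $\phi:\{1,\dots,k\}\to F$ with $\phi(i)\in S_i$; these form $S_1\otimes\dots\otimes S_k$. The chain has Colorful Helly Number $k$ if for all finite $S_1,\dots,S_k\subset V$ and $\ell$ with $S_1\otimes\dots\otimes S_k\subset\mathcal{H}_\ell$, some $S_j\in\mathcal{H}_{\ell+1}$.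 For a hypergraph $\mathcal{H}$ and finite $S$, $\omega_h(\mathcal{H}|_S)$ denotes the largest size of a subset $K\subset S$ with $\binom{K}{h}\subset\mathcal{H}$. For real $x$ and integer $m\ge0$, $\binom{x}{m}$ denotes $x(x-1)\cdots(x-m+1)/m!$. *)

theory Defs
  imports Complex_Main
begin

definition ksubsets :: "'a set \<Rightarrow> nat \<Rightarrow> 'a set set" where
  "ksubsets S h = {G. G \<subseteq> S \<and> card G = h}"

definition downwards_closed :: "'a set set \<Rightarrow> bool" where
  "downwards_closed \<H> \<longleftrightarrow> (\<forall>H G. H \<in> \<H> \<longrightarrow> G \<subseteq> H \<longrightarrow> G \<in> \<H>)"

definition hypergraph_chain :: "'a set \<Rightarrow> (int \<Rightarrow> 'a set set) \<Rightarrow> bool" where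
  "hypergraph_chain V \<H> \<longleftrightarrow>
     (\<forall>l. \<H> l \<subseteq> Pow V \<and> downwards_closed (\<H> l) \<and> \<H> l \<subseteq> \<H> (l + 1))"

definition helly_number :: "'a set \<Rightarrow> (int \<Rightarrow> 'a set set) \<Rightarrow> nat \<Rightarrow> bool" where
  "helly_number V \<H> h \<longleftrightarrow>
     (\<forall>l S. S \<subseteq> V \<longrightarrow> ksubsets S h \<subseteq> \<H> l \<longrightarrow> S \<in> \<H> (l + 1))"

definition colorful_selection :: "nat \<Rightarrow> (nat \<Rightarrow> 'a set) \<Rightarrow> 'a set \<Rightarrow> bool" where
  "colorful_selection k Ss F \<longleftrightarrow>
     (\<exists>\<phi>. \<phi> ` {1..k} = F \<and> (\<forall>i\<in>{1..k}. \<phi> i \<in> Ss i))"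

definition colorful_helly_number :: "'a set \<Rightarrow> (int \<Rightarrow> 'a set set) \<Rightarrow> nat \<Rightarrow> bool" where
  "colorful_helly_number V \<H> k \<longleftrightarrow>
     (\<forall>Ss l. (\<forall>i\<in>{1..k}. finite (Ss i) \<and> Ss i \<subseteq> V) \<longrightarrow>
        {F. colorful_selection k Ss F} \<subseteq> \<H> l \<longrightarrow> (\<exists>j\<in>{1..k}. Ss j \<in> \<H> (l + 1)))"

definition omega :: "nat \<Rightarrow> 'a set set \<Rightarrow> 'a set \<Rightarrow> nat" where
  "omega h \<H> S = Max {card K | K. K \<subseteq> S \<and> ksubsets K h \<subseteq> \<H>}"

end

theory Submission
  imports Defs
begin

lemma gbin_abs_le1: "0 \<le> x \<Longrightarrow> x \<le> real n \<Longrightarrow> \<bar>x gchoose n\<bar> \<le> 1"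
proof (induction n arbitrary: x)
  case 0 then show ?case by simp
next
  case (Suc n)
  show ?case
  proof (cases "x \<le> real n")
    case True
    have e: "x * (x gchoose n) = of_nat n * (x gchoose n) + of_nat (Suc n) * (x gchoose (Suc n))"
      by (rule gbinomial_mult_1)
    have e2: "(x gchoose Suc n) * (real n + 1) = (x - n) * (x gchoose n)"
      using e by (simp add: algebra_simps)
    have "x gchoose Suc n = (x - n) * (x gchoose n) / (real n + 1)"
      by (subst eq_divide_eq) (use e2 in simp)
    then have "\<bar>x gchoose Suc n\<bar> = \<bar>(x - n) * (x gchoose n) / (real n + 1)\<bar>" by simp
    also have "\<dots> = \<bar>x - n\<bar> * \<bar>x gchoose n\<bar> / (real n + 1)" by (simp add: abs_mult)
    also have "\<dots> \<le> 1"
    proof -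
      have "\<bar>x - n\<bar> \<le> real n + 1" using Suc.prems True by auto
      moreover have "\<bar>x gchoose n\<bar> \<le> 1" using Suc.IH Suc.prems True by auto
      ultimately have "\<bar>x - n\<bar> * \<bar>x gchoose n\<bar> \<le> (real n + 1) * 1"
        by (intro mult_mono) auto
      then show ?thesis by simp
    qed
    finally show ?thesis .
  next
    case False
    have e: "of_nat (Suc n) * (x gchoose Suc n) = x * ((x - 1) gchoose n)" by (rule gbinomial_absorption)
    have e2: "(x gchoose Suc n) * (real n + 1) = x * ((x - 1) gchoose n)"
      using e by (simp add: algebra_simps)
    have "x gchoose Suc n = x * ((x - 1) gchoose n) / (real n + 1)"
      by (subst eq_divide_eq) (use e2 in simp)
    then have "\<bar>x gchoose Suc n\<bar> = \<bar>x * ((x - 1) gchoose n) / (real n + 1)\<bar>" by simp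
    also have "\<dots> = \<bar>x\<bar> * \<bar>(x - 1) gchoose n\<bar> / (real n + 1)" by (simp add: abs_mult)
    also have "\<dots> \<le> 1"
    proof -
      have "\<bar>x\<bar> \<le> real n + 1" using Suc.prems False by auto
      moreover have "\<bar>(x-1) gchoose n\<bar> \<le> 1" using Suc.IH[of "x-1"] Suc.prems False by (cases "n = 0") auto
      ultimately have "\<bar>x\<bar> * \<bar>(x-1) gchoose n\<bar> \<le> (real n + 1) * 1"
        by (intro mult_mono) auto
      then show ?thesis by simp
    qed
    finally show ?thesis .
  qed
qed

lemma gbin_mono: "real k - 1 \<le> x \<Longrightarrow> x \<le> y \<Longrightarrow> x gchoose k \<le> (y::real) gchoose k"
proof -
  assume a: "real k - 1 \<le> x" "x \<le> y"
  have "(\<Prod>i=0..<k. x - of_nat i) \<le> (\<Prod>i=0..<k. y - of_nat i)"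
  proof (rule prod_mono)
    fix i assume "i \<in> {0..<k}"
    then have "i + 1 \<le> k" by simp
    then have "real i + 1 \<le> real k" by linarith
    then show "0 \<le> x - of_nat i \<and> x - of_nat i \<le> y - of_nat i" using a by simp
  qed
  then have "(\<Prod>i=0..<k. x - of_nat i) / fact k \<le> (\<Prod>i=0..<k. y - of_nat i) / fact k"
    by (rule divide_right_mono) simp
  then show ?thesis by (simp only: gbinomial_prod_rev)
qed

lemma omega_facts:
  assumes "finite S" "s \<ge> 1"
  shows "omega s \<K> S \<in> {card K | K. K \<subseteq> S \<and> ksubsets K s \<subseteq> \<K>}"
    and "\<And>K. K \<subseteq> S \<Longrightarrow> ksubsets K s \<subseteq> \<K> \<Longrightarrow> card K \<le> omega s \<K> S"
proof -
  let ?A = "{card K | K. K \<subseteq> S \<and> ksubsets K s \<subseteq> \<K>}"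
  have sub: "?A \<subseteq> card ` Pow S" by blast
  have fin: "finite ?A" using finite_subset[OF sub] assms(1) by simp
  have e: "ksubsets {} s = {}" using assms by (auto simp: ksubsets_def)
  have "0 \<in> ?A" by (intro CollectI exI[of _ "{}"]) (simp add: e)
  then have ne: "?A \<noteq> {}" by blast
  show "omega s \<K> S \<in> ?A" unfolding omega_def using Max_in[OF fin ne] .
  show "\<And>K. K \<subseteq> S \<Longrightarrow> ksubsets K s \<subseteq> \<K> \<Longrightarrow> card K \<le> omega s \<K> S"
    unfolding omega_def using fin by (intro Max_ge) auto
qed

lemma omega_le_card: "finite S \<Longrightarrow> s \<ge> 1 \<Longrightarrow> omega s \<K> S \<le> card S"
proof -
  assume a: "finite S" "s \<ge> 1"
  obtain K where K: "omega s \<K> S = card K" "K \<subseteq> S" using omega_facts(1)[OF a, of \<K>] by blast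
  show ?thesis unfolding K(1) by (rule card_mono[OF a(1) K(2)])
qed

lemma omega_mono: "finite S \<Longrightarrow> s \<ge> 1 \<Longrightarrow> S' \<subseteq> S \<Longrightarrow> omega s \<K> S' \<le> omega s \<K> S"
proof -
  assume a: "finite S" "s \<ge> 1" "S' \<subseteq> S"
  have f: "finite S'" using a finite_subset by blast
  obtain K where K: "omega s \<K> S' = card K" "K \<subseteq> S'" "ksubsets K s \<subseteq> \<K>"
    using omega_facts(1)[OF f a(2), of \<K>] by blast
  show ?thesis unfolding K(1) by (rule omega_facts(2)[OF a(1) a(2)]) (use K a in auto)
qed


definition pdisj :: "'a set set \<Rightarrow> bool" where
  "pdisj \<G> \<longleftrightarrow> (\<forall>G\<in>\<G>. \<forall>G'\<in>\<G>. G \<noteq> G' \<longrightarrow> G \<inter> G' = {})"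

lemma greedy:
  fixes S :: "'a set" and \<K> :: "'a set set"
  assumes "finite S" "s \<ge> 1"
  shows "\<exists>\<G>. \<G> \<subseteq> ksubsets S s \<and> pdisj \<G> \<and> (\<forall>G\<in>\<G>. G \<notin> \<K>) \<and> finite \<G>
            \<and> card S \<le> omega s \<K> S + s * card \<G>"
  using assms(1)
proof (induction S rule: finite_psubset_induct)
  case (psubset S)
  show ?case
  proof (cases "ksubsets S s \<subseteq> \<K>")
    case True
    then have "card S \<le> omega s \<K> S" using omega_facts(2)[OF psubset.hyps(1) assms(2)] by blast
    then show ?thesis by (intro exI[of _ "{}"]) (auto simp: pdisj_def)
  next
    case False
    then obtain G where G: "G \<subseteq> S" "card G = s" "G \<notin> \<K>" unfolding ksubsets_def by blast
    have Gne: "G \<noteq> {}" using G assms(2) by auto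
    have finG: "finite G" using G psubset.hyps(1) finite_subset by blast
    have "S - G \<subset> S" using G Gne by blast
    from psubset.IH[OF this] obtain \<G> where \<G>: "\<G> \<subseteq> ksubsets (S - G) s" "pdisj \<G>"
      "\<forall>G\<in>\<G>. G \<notin> \<K>" "finite \<G>" "card (S - G) \<le> omega s \<K> (S - G) + s * card \<G>"
      by blast
    have sub: "\<forall>H\<in>\<G>. H \<subseteq> S - G" using \<G>(1) unfolding ksubsets_def by blast
    have Gnot: "G \<notin> \<G>" using sub Gne by blast
    have disjG: "\<forall>H\<in>\<G>. G \<inter> H = {}" using sub by blast
    have c1: "card S = card (S - G) + s"
      using card_Diff_subset[OF finG G(1)] card_mono[OF psubset.hyps(1) G(1)] G(2) by simp
    have c2: "omega s \<K> (S - G) \<le> omega s \<K> S"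
      by (rule omega_mono) (use psubset.hyps(1) assms(2) in auto)
    have c3: "card (insert G \<G>) = card \<G> + 1" using Gnot \<G>(4) by simp
    have p1: "insert G \<G> \<subseteq> ksubsets S s" using \<G>(1) G unfolding ksubsets_def by blast
    have p2: "pdisj (insert G \<G>)" using \<G>(2) disjG unfolding pdisj_def by blast
    have p3: "\<forall>H\<in>insert G \<G>. H \<notin> \<K>" using \<G>(3) G(3) by blast
    have p4: "card S \<le> omega s \<K> S + s * card (insert G \<G>)"
      unfolding c3 c1 using \<G>(5) c2 by (simp add: algebra_simps)
    show ?thesis using p1 p2 p3 p4 \<G>(4) by blast
  qed
qed

lemma transversal:
  assumes ch: "colorful_helly_number V \<H> k" and k: "k \<ge> 1"
    and disj: "pdisj \<G>"
    and sub: "\<forall>G\<in>\<G>. finite G \<and> G \<subseteq> V \<and> G \<notin> \<H> (l+1)"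
    and T: "T \<subseteq> \<G>" "card T = k"
  shows "\<exists>F. F \<notin> \<H> l \<and> F \<subseteq> \<Union>T \<and> (\<forall>G\<in>T. card (F \<inter> G) = 1)"
proof -
  have finT: "finite T" using T k by (intro card_ge_0_finite) simp
  obtain f where f: "bij_betw f {1..k} T"
    using finite_same_card_bij[of "{1..k}" T] finT T by auto
  have fin: "\<forall>i\<in>{1..k}. finite (f i) \<and> f i \<subseteq> V"
    using f sub T bij_betw_apply by fastforce
  have notin: "\<not> (\<exists>j\<in>{1..k}. f j \<in> \<H> (l + 1))"
    using f sub T bij_betw_apply by fastforce
  have "\<not> {F. colorful_selection k f F} \<subseteq> \<H> l"
    using ch fin notin unfolding colorful_helly_number_def by blast
  then obtain F where F: "colorful_selection k f F" "F \<notin> \<H> l" by blast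
  then obtain \<phi> where \<phi>: "\<phi> ` {1..k} = F" "\<forall>i\<in>{1..k}. \<phi> i \<in> f i"
    unfolding colorful_selection_def by blast
  have key: "\<phi> j \<in> f i \<Longrightarrow> i \<in> {1..k} \<Longrightarrow> j \<in> {1..k} \<Longrightarrow> j = i" for i j
  proof (rule ccontr)
    assume a: "\<phi> j \<in> f i" "i \<in> {1..k}" "j \<in> {1..k}" "j \<noteq> i"
    have "f j \<noteq> f i" using f a bij_betw_imp_inj_on inj_onD by metis
    moreover have "f i \<in> \<G>" "f j \<in> \<G>" using f a T bij_betw_apply by fastforce+
    ultimately have "f j \<inter> f i = {}" using disj unfolding pdisj_def by blast
    then show False using a \<phi>(2) by blast
  qed
  have "F \<subseteq> \<Union>T" using \<phi> f bij_betw_apply by fastforce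
  moreover have "\<forall>G\<in>T. card (F \<inter> G) = 1"
  proof
    fix G assume "G \<in> T"
    then obtain i where i: "i \<in> {1..k}" "G = f i" using f bij_betw_imp_surj_on by blast
    have "F \<inter> G = {\<phi> i}"
    proof
      show "{\<phi> i} \<subseteq> F \<inter> G" using i \<phi> by auto
      show "F \<inter> G \<subseteq> {\<phi> i}"
      proof
        fix y assume "y \<in> F \<inter> G"
        then obtain j where j: "j \<in> {1..k}" "y = \<phi> j" "\<phi> j \<in> f i" using \<phi>(1) i by auto
        then have "j = i" using key i(1) by blast
        then show "y \<in> {\<phi> i}" using j by simp
      qed
    qed
    then show "card (F \<inter> G) = 1" by simp
  qed
  ultimately show ?thesis using F(2) by blast
qed


lemma card_meet:
  assumes "finite \<A>" "pdisj \<A>" "E \<subseteq> \<Union>\<A>" "\<forall>G\<in>\<A>. E \<inter> G \<noteq> {} \<longrightarrow> card (E \<inter> G) = 1"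
  shows "card E = card {G\<in>\<A>. E \<inter> G \<noteq> {}}"
proof -
  let ?I = "{G\<in>\<A>. E \<inter> G \<noteq> {}}"
  have finI: "finite ?I" using assms(1) by simp
  have eq: "E = (\<Union>G\<in>?I. E \<inter> G)" using assms(3) by blast
  have "card (\<Union>G\<in>?I. E \<inter> G) = (\<Sum>G\<in>?I. card (E \<inter> G))"
  proof (rule card_UN_disjoint[OF finI])
    show "\<forall>G\<in>?I. finite (E \<inter> G)" using assms(4) card_ge_0_finite by force
    show "\<forall>G\<in>?I. \<forall>G'\<in>?I. G \<noteq> G' \<longrightarrow> E \<inter> G \<inter> (E \<inter> G') = {}"
      using assms(2) unfolding pdisj_def by blast
  qed
  also have "\<dots> = (\<Sum>G\<in>?I. 1)" using assms(4) by (intro sum.cong) auto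
  also have "\<dots> = card ?I" by simp
  finally show ?thesis using eq by simp
qed

lemma pdisj_subset: "pdisj \<G> \<Longrightarrow> T \<subseteq> \<G> \<Longrightarrow> pdisj T"
  unfolding pdisj_def by blast

lemma count_a:
  assumes ch: "colorful_helly_number V \<H> k" and k: "k \<ge> 1"
    and disj: "pdisj \<G>"
    and sub: "\<forall>G\<in>\<G>. finite G \<and> G \<subseteq> V \<and> G \<notin> \<H> (l+1)"
    and GS: "\<G> \<subseteq> Pow S" and finS: "finite S"
  shows "card (ksubsets \<G> k) \<le> card (ksubsets S k - \<H> l)"
proof -
  define P where "P T F \<longleftrightarrow> F \<notin> \<H> l \<and> F \<subseteq> \<Union>T \<and> (\<forall>G\<in>T. card (F \<inter> G) = 1)" for T F
  define Fof where "Fof T = (SOME F. P T F)" for T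
  have PF: "P T (Fof T)" if "T \<in> ksubsets \<G> k" for T
    unfolding Fof_def P_def
    by (rule someI_ex) (rule transversal[OF ch k disj sub], use that in \<open>auto simp: ksubsets_def\<close>)
  have finT: "finite T" if "T \<in> ksubsets \<G> k" for T
    using that k unfolding ksubsets_def by (intro card_ge_0_finite) simp
  have recov: "{G\<in>\<G>. Fof T \<inter> G \<noteq> {}} = T" if T: "T \<in> ksubsets \<G> k" for T
  proof
    have TG: "T \<subseteq> \<G>" using T unfolding ksubsets_def by blast
    show "{G\<in>\<G>. Fof T \<inter> G \<noteq> {}} \<subseteq> T"
    proof
      fix G assume G: "G \<in> {G\<in>\<G>. Fof T \<inter> G \<noteq> {}}"
      then obtain x where x: "x \<in> Fof T" "x \<in> G" by blast
      then obtain G' where G': "G' \<in> T" "x \<in> G'" using PF[OF T] unfolding P_def by blast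
      then have "G = G'" using disj TG G x unfolding pdisj_def by blast
      then show "G \<in> T" using G' by simp
    qed
    show "T \<subseteq> {G\<in>\<G>. Fof T \<inter> G \<noteq> {}}"
    proof
      fix G assume G: "G \<in> T"
      then have "card (Fof T \<inter> G) = 1" using PF[OF T] unfolding P_def by blast
      then show "G \<in> {G\<in>\<G>. Fof T \<inter> G \<noteq> {}}" using G TG by fastforce
    qed
  qed
  have inj: "inj_on Fof (ksubsets \<G> k)"
    by (rule inj_onI) (metis recov)
  have img: "Fof ` ksubsets \<G> k \<subseteq> ksubsets S k - \<H> l"
  proof
    fix F assume "F \<in> Fof ` ksubsets \<G> k"
    then obtain T where T: "T \<in> ksubsets \<G> k" "F = Fof T" by blast
    have TG: "T \<subseteq> \<G>" "card T = k" using T unfolding ksubsets_def by blast+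
    have p: "P T F" using PF[OF T(1)] T(2) by simp
    have "card F = card {G\<in>T. F \<inter> G \<noteq> {}}"
      by (rule card_meet) (use p finT[OF T(1)] pdisj_subset[OF disj TG(1)] in \<open>auto simp: P_def\<close>)
    also have "{G\<in>T. F \<inter> G \<noteq> {}} = T" using p unfolding P_def by fastforce
    finally have "card F = k" using TG by simp
    moreover have "F \<subseteq> S" using p TG GS unfolding P_def by blast
    ultimately show "F \<in> ksubsets S k - \<H> l" using p unfolding P_def ksubsets_def by blast
  qed
  have fin: "finite (ksubsets S k - \<H> l)"
    by (rule finite_subset[of _ "Pow S"]) (use finS in \<open>auto simp: ksubsets_def\<close>)
  show ?thesis by (rule card_inj_on_le[OF inj img fin])
qed


lemma count_b:
  assumes ch: "colorful_helly_number V \<H> k" and k: "k \<ge> 1"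
    and he: "helly_number V \<H> h" and h: "h \<ge> 1" and hk: "h \<le> k"
    and disj: "pdisj \<G>"
    and sub: "\<forall>G\<in>\<G>. finite G \<and> G \<subseteq> V \<and> G \<notin> \<H> (l+2)"
    and GS: "\<G> \<subseteq> Pow S" and finS: "finite S" and finG: "finite \<G>"
  shows "card (ksubsets \<G> k) \<le> card (ksubsets S h - \<H> l) * ((card \<G> - h) choose (k - h))"
proof -
  have sub': "\<forall>G\<in>\<G>. finite G \<and> G \<subseteq> V \<and> G \<notin> \<H> ((l+1)+1)"
    using sub by (simp add: add.assoc)
  define Q where "Q T E \<longleftrightarrow> E \<notin> \<H> l \<and> card E = h \<and>
      (\<exists>F. E \<subseteq> F \<and> F \<subseteq> \<Union>T \<and> (\<forall>G\<in>T. card (F \<inter> G) = 1))" for T E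
  define Eof where "Eof T = (SOME E. Q T E)" for T
  let ?A = "ksubsets \<G> k"
  let ?M = "ksubsets S h - \<H> l"
  let ?B = "(card \<G> - h) choose (k - h)"
  have exQ: "\<exists>E. Q T E" if T: "T \<in> ?A" for T
  proof -
    obtain F where F: "F \<notin> \<H> (l+1)" "F \<subseteq> \<Union>T" "\<forall>G\<in>T. card (F \<inter> G) = 1"
      using transversal[OF ch k disj sub', of T] T unfolding ksubsets_def by blast
    have FV: "F \<subseteq> V" using F(2) T sub unfolding ksubsets_def by blast
    have "\<not> ksubsets F h \<subseteq> \<H> l" using he FV F(1) unfolding helly_number_def by blast
    then obtain E where "E \<subseteq> F" "card E = h" "E \<notin> \<H> l" unfolding ksubsets_def by blast
    then show ?thesis unfolding Q_def using F by blast
  qed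
  have QE: "Q T (Eof T)" if "T \<in> ?A" for T
    unfolding Eof_def by (rule someI_ex[OF exQ[OF that]])
  have finT: "finite T" if "T \<in> ?A" for T
    using that k unfolding ksubsets_def by (intro card_ge_0_finite) simp
  define I where "I E = {G\<in>\<G>. E \<inter> G \<noteq> {}}" for E
  have IT: "I (Eof T) \<subseteq> T \<and> card (I (Eof T)) = h" if T: "T \<in> ?A" for T
  proof -
    have TG: "T \<subseteq> \<G>" using T unfolding ksubsets_def by blast
    obtain F where F: "Eof T \<subseteq> F" "F \<subseteq> \<Union>T" "\<forall>G\<in>T. card (F \<inter> G) = 1"
      and cE: "card (Eof T) = h"
      using QE[OF T] unfolding Q_def by blast
    have eqI: "I (Eof T) = {G\<in>T. Eof T \<inter> G \<noteq> {}}"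
    proof
      show "I (Eof T) \<subseteq> {G\<in>T. Eof T \<inter> G \<noteq> {}}"
      proof
        fix G assume G: "G \<in> I (Eof T)"
        then obtain x where x: "x \<in> Eof T" "x \<in> G" "G \<in> \<G>" unfolding I_def by blast
        then obtain G' where G': "G' \<in> T" "x \<in> G'" using F by blast
        then have "G = G'" using disj TG x unfolding pdisj_def by blast
        then show "G \<in> {G\<in>T. Eof T \<inter> G \<noteq> {}}" using G' x by blast
      qed
      show "{G\<in>T. Eof T \<inter> G \<noteq> {}} \<subseteq> I (Eof T)" using TG unfolding I_def by blast
    qed
    have one: "\<forall>G\<in>T. Eof T \<inter> G \<noteq> {} \<longrightarrow> card (Eof T \<inter> G) = 1"
    proof (intro ballI impI)
      fix G assume G: "G \<in> T" "Eof T \<inter> G \<noteq> {}"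
      have c1: "card (F \<inter> G) = 1" using F G by blast
      then have "finite (F \<inter> G)" by (intro card_ge_0_finite) simp
      moreover have sb: "Eof T \<inter> G \<subseteq> F \<inter> G" using F(1) by blast
      ultimately have "card (Eof T \<inter> G) \<le> card (F \<inter> G)" by (rule card_mono)
      then have "card (Eof T \<inter> G) \<le> 1" using c1 by simp
      moreover have "finite (Eof T \<inter> G)"
        using \<open>finite (F \<inter> G)\<close> \<open>Eof T \<inter> G \<subseteq> F \<inter> G\<close> finite_subset by blast
      then have "card (Eof T \<inter> G) \<noteq> 0" using G(2) by simp
      ultimately show "card (Eof T \<inter> G) = 1" by simp
    qed
    have "card (Eof T) = card {G\<in>T. Eof T \<inter> G \<noteq> {}}"
      by (rule card_meet[OF finT[OF T] pdisj_subset[OF disj TG]]) (use F one in auto)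
    then show ?thesis using eqI cE by auto
  qed
  have EM: "Eof T \<in> ?M" if T: "T \<in> ?A" for T
  proof -
    obtain F where F: "Eof T \<subseteq> F" "F \<subseteq> \<Union>T" and E: "Eof T \<notin> \<H> l" "card (Eof T) = h"
      using QE[OF T] unfolding Q_def by blast
    have "Eof T \<subseteq> S" using F T GS unfolding ksubsets_def by blast
    then show ?thesis using E unfolding ksubsets_def by blast
  qed
  have finM: "finite ?M"
    by (rule finite_subset[of _ "Pow S"]) (use finS in \<open>auto simp: ksubsets_def\<close>)
  have finA: "finite ?A"
    by (rule finite_subset[of _ "Pow \<G>"]) (use finG in \<open>auto simp: ksubsets_def\<close>)
  have fiber: "card {T\<in>?A. Eof T = E} \<le> ?B" for E
  proof (cases "{T\<in>?A. Eof T = E} = {}")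
    case True then show ?thesis by (simp only: card.empty)
  next
    case False
    then obtain T0 where T0: "T0 \<in> ?A" "Eof T0 = E" by blast
    have cI: "card (I E) = h" using IT[OF T0(1)] T0(2) by simp
    have IG: "I E \<subseteq> \<G>" unfolding I_def by blast
    have finI: "finite (I E)" using finite_subset[OF IG finG] .
    have inj: "inj_on (\<lambda>T. T - I E) {T\<in>?A. Eof T = E}"
    proof (rule inj_onI)
      fix T T' assume a: "T \<in> {T\<in>?A. Eof T = E}" "T' \<in> {T\<in>?A. Eof T = E}" "T - I E = T' - I E"
      have "I E \<subseteq> T" using IT[of T] a by auto
      moreover have "I E \<subseteq> T'" using IT[of T'] a by auto
      ultimately show "T = T'" using a(3) by blast
    qed
    have img: "(\<lambda>T. T - I E) ` {T\<in>?A. Eof T = E} \<subseteq> ksubsets (\<G> - I E) (k - h)"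
    proof
      fix U assume "U \<in> (\<lambda>T. T - I E) ` {T\<in>?A. Eof T = E}"
      then obtain T where T: "T \<in> ?A" "Eof T = E" "U = T - I E" by blast
      have IT': "I E \<subseteq> T" using IT[OF T(1)] T(2) by simp
      have "card U = k - h" using T(3) card_Diff_subset[OF finI IT'] cI T(1) unfolding ksubsets_def by simp
      moreover have "U \<subseteq> \<G> - I E" using T unfolding ksubsets_def by blast
      ultimately show "U \<in> ksubsets (\<G> - I E) (k - h)" unfolding ksubsets_def by blast
    qed
    have fin2: "finite (ksubsets (\<G> - I E) (k - h))"
      by (rule finite_subset[of _ "Pow \<G>"]) (use finG in \<open>auto simp: ksubsets_def\<close>)
    have "card {T\<in>?A. Eof T = E} \<le> card (ksubsets (\<G> - I E) (k - h))"
      by (rule card_inj_on_le[OF inj img fin2])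
    also have "\<dots> = card (\<G> - I E) choose (k - h)"
      unfolding ksubsets_def by (rule n_subsets) (use finG in simp)
    also have "card (\<G> - I E) = card \<G> - h" using card_Diff_subset[OF finI IG] cI by simp
    finally show ?thesis .
  qed
  have "?A \<subseteq> (\<Union>E\<in>?M. {T\<in>?A. Eof T = E})" using EM by blast
  then have "card ?A \<le> card (\<Union>E\<in>?M. {T\<in>?A. Eof T = E})"
    by (rule card_mono[rotated]) (use finM finA in simp)
  also have "\<dots> \<le> (\<Sum>E\<in>?M. card {T\<in>?A. Eof T = E})" by (rule card_UN_le[OF finM])
  also have "\<dots> \<le> card ?M * ?B" using sum_bounded_above[of ?M "\<lambda>E. card {T\<in>?A. Eof T = E}" ?B] fiber
    by simp
  finally show ?thesis .
qed


lemma final_a: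
  fixes x :: real
  assumes "0 \<le> x" "x \<le> real r" "k \<ge> 1" "r \<ge> 1 \<Longrightarrow> c \<ge> 1" "(r choose k) \<le> c"
  shows "x gchoose k \<le> real c"
proof (cases "r = 0")
  case True
  then have "x = 0" using assms by simp
  moreover obtain k' where "k = Suc k'" using assms(3) by (cases k) auto
  ultimately show ?thesis by simp
next
  case False
  then have c1: "real c \<ge> 1" using assms(4) by simp
  show ?thesis
  proof (cases "x \<le> real k")
    case True
    then have "\<bar>x gchoose k\<bar> \<le> 1" using gbin_abs_le1 assms(1) by blast
    then show ?thesis using c1 by linarith
  next
    case False
    then have "x gchoose k \<le> real r gchoose k" using gbin_mono[of k x "real r"] assms(2) by simp
    also have "\<dots> = real (r choose k)" by (simp add: binomial_gbinomial)
    also have "\<dots> \<le> real c" using assms(5) by simp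
    finally show ?thesis .
  qed
qed

lemma final_b:
  fixes x :: real
  assumes "0 \<le> x" "x \<le> real r" "h \<ge> 1" "h \<le> k" "r \<ge> 1 \<Longrightarrow> c \<ge> 1"
    "r \<ge> k \<Longrightarrow> (r choose h) \<le> c * (k choose h)"
  shows "(x gchoose h) / real (k choose h) \<le> real c"
proof -
  have B: "real (k choose h) \<ge> 1" using assms(4) zero_less_binomial[of h k] by linarith
  show ?thesis
  proof (cases "r = 0")
    case True
    then have "x = 0" using assms by simp
    moreover obtain h' where "h = Suc h'" using assms(3) by (cases h) auto
    ultimately show ?thesis by simp
  next
    case False
    then have c1: "real c \<ge> 1" using assms(5) by simp
    have le1: "y / real (k choose h) \<le> real c" if "y \<le> 1" for y
    proof -
      have "y / real (k choose h) \<le> 1" using that B by (simp add: divide_le_eq)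
      then show ?thesis using c1 by linarith
    qed
    show ?thesis
    proof (cases "x \<le> real h")
      case True
      then have "\<bar>x gchoose h\<bar> \<le> 1" using gbin_abs_le1 assms(1) by blast
      then show ?thesis using le1 by simp
    next
      case False
      then have "x gchoose h \<le> real r gchoose h" using gbin_mono[of h x "real r"] assms(2) by simp
      also have "\<dots> = real (r choose h)" by (simp add: binomial_gbinomial)
      finally have xr: "x gchoose h \<le> real (r choose h)" .
      show ?thesis
      proof (cases "r \<ge> k")
        case True
        then have "real (r choose h) \<le> real c * real (k choose h)" using assms(6)
          by (metis of_nat_le_iff of_nat_mult)
        then have "x gchoose h \<le> real c * real (k choose h)" using xr by linarith
        then show ?thesis using B by (simp add: divide_le_eq)
      next
        case False
        then have "r choose h \<le> k choose h" by (intro binomial_right_mono) simp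
        then have "x gchoose h \<le> real (k choose h)" using xr
          by (metis of_nat_le_iff order_trans)
        moreover have "real (k choose h) \<le> real c * real (k choose h)" using mult_right_mono[OF c1, of "real (k choose h)"] by simp
        ultimately have "x gchoose h \<le> real c * real (k choose h)" by linarith
        then show ?thesis using B by (simp add: divide_le_eq)
      qed
    qed
  qed
qed


theorem lemma1:
  fixes V :: "'a set" and \<H> :: "int \<Rightarrow> 'a set set" and h k :: nat
  assumes "hypergraph_chain V \<H>"
    and "h \<ge> 1" and "k \<ge> 1"
    and "helly_number V \<H> h"
    and "colorful_helly_number V \<H> k"
  shows "\<forall>l S. finite S \<and> S \<subseteq> V \<longrightarrow>
      real (card (ksubsets S k - \<H> l))
        \<ge> ((real (card S) - real (omega k (\<H> (l + 1)) S)) / real k) gchoose k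
    \<and> real (card (ksubsets S h - \<H> l))
        \<ge> (((real (card S) - real (omega h (\<H> (l + 2)) S)) / real h) gchoose h)
             / real (k choose h)"
proof (intro allI impI)
  fix l S assume LS: "finite S \<and> S \<subseteq> V"
  then have finS: "finite S" and SV: "S \<subseteq> V" by auto
  have mono1: "\<H> l \<subseteq> \<H> (l+1)" using assms(1) unfolding hypergraph_chain_def by blast
  have mono2: "\<H> (l+1) \<subseteq> \<H> (l+2)" using assms(1) unfolding hypergraph_chain_def
    by (metis add.assoc one_add_one)
  have finK: "finite (ksubsets S s - X)" for s X
    by (rule finite_subset[of _ "Pow S"]) (use finS in \<open>auto simp: ksubsets_def\<close>)
  have partA: "real (card (ksubsets S k - \<H> l))
        \<ge> ((real (card S) - real (omega k (\<H> (l + 1)) S)) / real k) gchoose k"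
  proof -
    obtain \<G> where G: "\<G> \<subseteq> ksubsets S k" "pdisj \<G>" "\<forall>G\<in>\<G>. G \<notin> \<H> (l+1)" "finite \<G>"
      "card S \<le> omega k (\<H> (l+1)) S + k * card \<G>"
      using greedy[OF finS assms(3), of "\<H> (l+1)"] by blast
    have sub: "\<forall>G\<in>\<G>. finite G \<and> G \<subseteq> V \<and> G \<notin> \<H> (l+1)"
      using G(1,3) SV finS finite_subset unfolding ksubsets_def by blast
    have GS: "\<G> \<subseteq> Pow S" using G(1) unfolding ksubsets_def by blast
    have ca: "card \<G> choose k \<le> card (ksubsets S k - \<H> l)"
      using count_a[OF assms(5) assms(3) G(2) sub GS finS] n_subsets[OF G(4), of k]
      unfolding ksubsets_def by simp
    have c1: "card (ksubsets S k - \<H> l) \<ge> 1" if r1: "card \<G> \<ge> 1"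
    proof -
      have "\<G> \<noteq> {}" using r1 by auto
      then obtain G0 where "G0 \<in> \<G>" by blast
      then have "G0 \<in> ksubsets S k - \<H> l" using G mono1 by blast
      then show ?thesis using finK[of k "\<H> l"] by (metis One_nat_def Suc_leI card_gt_0_iff empty_iff)
    qed
    have om: "omega k (\<H> (l+1)) S \<le> card S" by (rule omega_le_card[OF finS assms(3)])
    have x0: "0 \<le> (real (card S) - real (omega k (\<H> (l + 1)) S)) / real k" using om by simp
    have xr: "(real (card S) - real (omega k (\<H> (l + 1)) S)) / real k \<le> real (card \<G>)"
    proof -
      have "real (card S) \<le> real (omega k (\<H> (l+1)) S) + real k * real (card \<G>)"
        using G(5) by (metis of_nat_add of_nat_le_iff of_nat_mult)
      then show ?thesis using assms(3) by (simp add: divide_le_eq algebra_simps)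
    qed
    show ?thesis by (rule final_a[OF x0 xr assms(3) c1 ca])
  qed
  have partB: "real (card (ksubsets S h - \<H> l))
        \<ge> (((real (card S) - real (omega h (\<H> (l + 2)) S)) / real h) gchoose h)
             / real (k choose h)"
  proof (cases "h \<le> k")
    case False
    then have z: "k choose h = 0" by simp
    show ?thesis by (simp only: z of_nat_0 div_by_0 of_nat_0_le_iff)
  next
    case hk: True
    obtain \<G> where G: "\<G> \<subseteq> ksubsets S h" "pdisj \<G>" "\<forall>G\<in>\<G>. G \<notin> \<H> (l+2)" "finite \<G>"
      "card S \<le> omega h (\<H> (l+2)) S + h * card \<G>"
      using greedy[OF finS assms(2), of "\<H> (l+2)"] by blast
    have sub: "\<forall>G\<in>\<G>. finite G \<and> G \<subseteq> V \<and> G \<notin> \<H> (l+2)"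
      using G(1,3) SV finS finite_subset unfolding ksubsets_def by blast
    have GS: "\<G> \<subseteq> Pow S" using G(1) unfolding ksubsets_def by blast
    let ?c = "card (ksubsets S h - \<H> l)"
    let ?r = "card \<G>"
    have cb: "?r choose k \<le> ?c * ((?r - h) choose (k - h))"
      using count_b[OF assms(5) assms(3) assms(4) assms(2) hk G(2) sub GS finS G(4)] n_subsets[OF G(4), of k]
      unfolding ksubsets_def by simp
    have cb2: "?r choose h \<le> ?c * (k choose h)" if rk: "?r \<ge> k"
    proof -
      have pos: "(?r - h) choose (k - h) > 0" using rk hk by simp
      have "(?r choose h) * ((?r - h) choose (k - h)) = (?r choose k) * (k choose h)"
        using choose_mult[OF hk rk] by simp
      also have "\<dots> \<le> ?c * ((?r - h) choose (k - h)) * (k choose h)"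
        using cb by simp
      also have "\<dots> = (?c * (k choose h)) * ((?r - h) choose (k - h))" by simp
      finally show ?thesis using pos by simp
    qed
    have c1: "?c \<ge> 1" if r1: "?r \<ge> 1"
    proof -
      have "\<G> \<noteq> {}" using r1 by auto
      then obtain G0 where "G0 \<in> \<G>" by blast
      then have "G0 \<in> ksubsets S h - \<H> l" using G mono1 mono2 by blast
      then show ?thesis using finK[of h "\<H> l"] by (metis One_nat_def Suc_leI card_gt_0_iff empty_iff)
    qed
    have om: "omega h (\<H> (l+2)) S \<le> card S" by (rule omega_le_card[OF finS assms(2)])
    have x0: "0 \<le> (real (card S) - real (omega h (\<H> (l + 2)) S)) / real h" using om by simp
    have xr: "(real (card S) - real (omega h (\<H> (l + 2)) S)) / real h \<le> real ?r"
    proof -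
      have "real (card S) \<le> real (omega h (\<H> (l+2)) S) + real h * real ?r"
        using G(5) by (metis of_nat_add of_nat_le_iff of_nat_mult)
      then show ?thesis using assms(2) by (simp add: divide_le_eq algebra_simps)
    qed
    show ?thesis by (rule final_b[OF x0 xr assms(2) hk c1 cb2])
  qed
  show "real (card (ksubsets S k - \<H> l))
        \<ge> ((real (card S) - real (omega k (\<H> (l + 1)) S)) / real k) gchoose k
    \<and> real (card (ksubsets S h - \<H> l))
        \<ge> (((real (card S) - real (omega h (\<H> (l + 2)) S)) / real h) gchoose h)
             / real (k choose h)" using partA partB by blast
qed

end
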